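(* Let $\mathcal{S}=(S,\overline{S})$ be a bisection of minimal potential. Then for all $x\in S$ and $y\in\overline{S}$, $$\mathrm{def}_{\mathcal{S}}(x)+\mathrm{def}_{\mathcal{S}}(y)+2W(x,y)\ge a_x-a_y.$$
   Context: $G$ is a finite simple undirected graph with an odd number $n$ of vertices, each vertex $x$ having stubbornness $\alpha_x\in(0,1)$ and $a_x=\lfloor\alpha_x/(1-\alpha_x)\rfloor$. For vertex sets $A,B$, $W(A,B)$ is the number of edges with one endpoint in $A$ and the other in $B$ (so $W(x,y)=1$ iff $x,y$ are adjacent). A bisection $(S,\overline{S})$ partitions the vertices with $|S|=\frac{n+1}{2}$, $|\overline{S}|=\frac{n-1}{2}$. Deficiency: $\mathrm{def}_{\mathcal{S}}(x)=W(x,S)-W(x,\overline{S})$ for $x\in S$, and $W(x,\overline{S})-W(x,S)$ for $x\in\overline{S}$. Potential: $\Phi(S,\overline{S})=W(S,\overline{S})+\frac12\big(\sum_{x\in S}a_x-\sum_{y\in\overline{S}}a_y\big)$. $\mathcal{S}$ has minimal potential if $\Phi(S,\overline{S})\le\Phi(S\setminus\{x\}\cup\{y\},\overline{S}\setminus\{y\}\cup\{x\})$ for all $x\in S$, $y\in\overline{S}$. *)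

theory Defs
  imports Complex_Main
begin

definition simple_graph :: "'a set \<Rightarrow> ('a \<Rightarrow> 'a \<Rightarrow> bool) \<Rightarrow> bool" where
  "simple_graph V E \<longleftrightarrow> finite V \<and> (\<forall>x y. E x y \<longrightarrow> x \<in> V \<and> y \<in> V)
     \<and> (\<forall>x y. E x y \<longrightarrow> E y x) \<and> (\<forall>x. \<not> E x x)"

definition W :: "('a \<Rightarrow> 'a \<Rightarrow> bool) \<Rightarrow> 'a set \<Rightarrow> 'a set \<Rightarrow> nat" where
  "W E A B = card {e. \<exists>u v. e = {u, v} \<and> E u v \<and> u \<in> A \<and> v \<in> B}"

definition a_of :: "('a \<Rightarrow> real) \<Rightarrow> 'a \<Rightarrow> int" where
  "a_of \<alpha> x = \<lfloor>\<alpha> x / (1 - \<alpha> x)\<rfloor>"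

definition bisection :: "'a set \<Rightarrow> 'a set \<Rightarrow> bool" where
  "bisection V S \<longleftrightarrow> S \<subseteq> V \<and> card S = (card V + 1) div 2 \<and> card (V - S) = (card V - 1) div 2"

definition deficiency :: "'a set \<Rightarrow> ('a \<Rightarrow> 'a \<Rightarrow> bool) \<Rightarrow> 'a set \<Rightarrow> 'a \<Rightarrow> int" where
  "deficiency V E S x =
     (if x \<in> S then int (W E {x} S) - int (W E {x} (V - S))
      else int (W E {x} (V - S)) - int (W E {x} S))"

definition potential :: "'a set \<Rightarrow> ('a \<Rightarrow> 'a \<Rightarrow> bool) \<Rightarrow> ('a \<Rightarrow> real) \<Rightarrow> 'a set \<Rightarrow> real" where
  "potential V E \<alpha> S = real (W E S (V - S))
     + (1/2) * (real_of_int (\<Sum>x\<in>S. a_of \<alpha> x) - real_of_int (\<Sum>y\<in>V - S. a_of \<alpha> y))"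

definition minimal_potential :: "'a set \<Rightarrow> ('a \<Rightarrow> 'a \<Rightarrow> bool) \<Rightarrow> ('a \<Rightarrow> real) \<Rightarrow> 'a set \<Rightarrow> bool" where
  "minimal_potential V E \<alpha> S \<longleftrightarrow>
     (\<forall>x\<in>S. \<forall>y\<in>V - S. potential V E \<alpha> S \<le> potential V E \<alpha> (S - {x} \<union> {y}))"

end

theory Submission
  imports Defs
begin

definition ee :: "('a \<Rightarrow> 'a \<Rightarrow> bool) \<Rightarrow> 'a \<Rightarrow> 'a \<Rightarrow> int" where
  "ee E u v = (if E u v then 1 else 0)"

lemma W_single:
  assumes "finite B"
  shows "int (W E {x} B) = (\<Sum>v\<in>B. ee E x v)"
proof -
  have "{e. \<exists>u v. e = {u, v} \<and> E u v \<and> u \<in> {x} \<and> v \<in> B} = (\<lambda>v. {x,v}) ` {v\<in>B. E x v}"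
    by auto
  moreover have "inj_on (\<lambda>v. {x,v}) {v\<in>B. E x v}"
    by (auto simp: inj_on_def doubleton_eq_iff)
  ultimately have "W E {x} B = card {v\<in>B. E x v}"
    unfolding W_def by (simp add: card_image)
  also have "int \<dots> = (\<Sum>v\<in>B. ee E x v)"
    using assms by (simp add: ee_def sum.If_cases Int_def)
  finally show ?thesis .
qed

lemma W_disj:
  assumes "finite A" "finite B" "A \<inter> B = {}"
  shows "int (W E A B) = (\<Sum>u\<in>A. \<Sum>v\<in>B. ee E u v)"
proof -
  let ?P = "{p\<in>A \<times> B. E (fst p) (snd p)}"
  have "{e. \<exists>u v. e = {u, v} \<and> E u v \<and> u \<in> A \<and> v \<in> B} = (\<lambda>p. {fst p, snd p}) ` ?P"
  proof (rule set_eqI, rule iffI)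
    fix e assume "e \<in> {e. \<exists>u v. e = {u, v} \<and> E u v \<and> u \<in> A \<and> v \<in> B}"
    then obtain u v where "e = {u,v}" "E u v" "u \<in> A" "v \<in> B" by blast
    thus "e \<in> (\<lambda>p. {fst p, snd p}) ` ?P" by (intro image_eqI[of _ _ "(u,v)"]) auto
  next
    fix e assume "e \<in> (\<lambda>p. {fst p, snd p}) ` ?P"
    then obtain a b where "e = {a,b}" "E a b" "a \<in> A" "b \<in> B" by auto
    thus "e \<in> {e. \<exists>u v. e = {u, v} \<and> E u v \<and> u \<in> A \<and> v \<in> B}" by blast
  qed
  moreover have "inj_on (\<lambda>p. {fst p, snd p}) ?P"
    using assms(3) by (auto simp: inj_on_def doubleton_eq_iff)
  ultimately have "W E A B = card ?P"
    unfolding W_def by (simp add: card_image)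
  also have "int \<dots> = (\<Sum>p\<in>?P. 1)" by simp
  also have "\<dots> = (\<Sum>p\<in>A \<times> B. ee E (fst p) (snd p))"
    using assms by (simp add: ee_def sum.If_cases Int_def)
  also have "\<dots> = (\<Sum>u\<in>A. \<Sum>v\<in>B. ee E u v)"
    by (simp add: sum.cartesian_product case_prod_beta')
  finally show ?thesis .
qed

theorem lemma2:
  fixes V :: "'a set" and E :: "'a \<Rightarrow> 'a \<Rightarrow> bool" and \<alpha> :: "'a \<Rightarrow> real" and S :: "'a set"
  assumes "simple_graph V E"
    and "odd (card V)"
    and "\<forall>x\<in>V. 0 < \<alpha> x \<and> \<alpha> x < 1"
    and "bisection V S"
    and "minimal_potential V E \<alpha> S"
    and "x \<in> S" and "y \<in> V - S"
  shows "deficiency V E S x + deficiency V E S y + 2 * int (W E {x} {y}) \<ge> a_of \<alpha> x - a_of \<alpha> y"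
proof -
  have fV: "finite V" and sym: "\<And>u v. ee E u v = ee E v u" and irr: "\<And>u. ee E u u = 0"
    using assms(1) unfolding simple_graph_def ee_def by auto
  have SV: "S \<subseteq> V" using assms(4) unfolding bisection_def by auto
  have fS: "finite S" using fV SV finite_subset by auto
  define T where "T = V - S"
  define S0 where "S0 = S - {x}"
  define T0 where "T0 = T - {y}"
  have fT: "finite T" "finite S0" "finite T0" using fV fS by (auto simp: T_def S0_def T0_def)
  have xy: "x \<noteq> y" "x \<notin> T0" "y \<notin> S0" "x \<notin> S0" "y \<notin> T0"
    using assms(6,7) by (auto simp: T_def S0_def T0_def)
  have Seq: "S = insert x S0" using assms(6) by (auto simp: S0_def)
  have Teq: "T = insert y T0" using assms(7) by (auto simp: T0_def T_def)
  define S' where "S' = S - {x} \<union> {y}"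
  have S'eq: "S' = insert y S0" by (auto simp: S'_def S0_def)
  have T'eq: "V - S' = insert x T0" using assms(6,7) SV by (auto simp: S'_def T0_def T_def)
  have d0: "S0 \<inter> T0 = {}" by (auto simp: S0_def T0_def T_def)
  let ?e = "ee E"
  let ?X = "\<Sum>u\<in>S0. \<Sum>v\<in>T0. ?e u v"
  have cut: "int (W E S (V - S)) = ?X + (\<Sum>u\<in>S0. ?e u y) + (\<Sum>v\<in>T0. ?e x v) + ?e x y"
  proof -
    have "int (W E S (V - S)) = (\<Sum>u\<in>insert x S0. \<Sum>v\<in>insert y T0. ?e u v)"
      using W_disj[of S "V - S" E] fS fV Seq Teq T_def by auto
    also have "\<dots> = ?X + (\<Sum>u\<in>S0. ?e u y) + (\<Sum>v\<in>T0. ?e x v) + ?e x y"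
      using fT xy by (simp add: sum.distrib)
    finally show ?thesis .
  qed
  have cut': "int (W E S' (V - S')) = ?X + (\<Sum>u\<in>S0. ?e u x) + (\<Sum>v\<in>T0. ?e y v) + ?e y x"
  proof -
    have "int (W E S' (V - S')) = (\<Sum>u\<in>insert y S0. \<Sum>v\<in>insert x T0. ?e u v)"
      using W_disj[of S' "V - S'" E] fT fV xy S'eq T'eq d0 by (simp add: S'eq)
    also have "\<dots> = ?X + (\<Sum>u\<in>S0. ?e u x) + (\<Sum>v\<in>T0. ?e y v) + ?e y x"
      using fT xy by (simp add: sum.distrib)
    finally show ?thesis .
  qed
  have dx: "deficiency V E S x = (\<Sum>u\<in>S0. ?e x u) - (\<Sum>v\<in>T0. ?e x v) - ?e x y"
    using assms(6) W_single[of S E x] W_single[of "V - S" E x] fS fV fT xy Seq Teq T_def irr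
    by (simp add: deficiency_def)
  have dy: "deficiency V E S y = (\<Sum>v\<in>T0. ?e y v) - (\<Sum>u\<in>S0. ?e y u) - ?e y x"
    using assms(7) W_single[of S E y] W_single[of "V - S" E y] fS fV fT xy Seq Teq T_def irr
    by (simp add: deficiency_def)
  have wxy: "int (W E {x} {y}) = ?e x y" using W_single[of "{y}" E x] by simp
  have s1: "(\<Sum>u\<in>S0. ?e u y) = (\<Sum>u\<in>S0. ?e y u)" "(\<Sum>u\<in>S0. ?e u x) = (\<Sum>u\<in>S0. ?e x u)"
    using sym by auto
  let ?a = "a_of \<alpha>"
  have aS: "(\<Sum>u\<in>S'. ?a u) = (\<Sum>u\<in>S. ?a u) - ?a x + ?a y"
    using fT xy Seq S'eq by simp
  have aT: "(\<Sum>u\<in>V - S'. ?a u) = (\<Sum>u\<in>V - S. ?a u) - ?a y + ?a x"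
    using fT xy Teq T'eq T_def by simp
  have "potential V E \<alpha> S \<le> potential V E \<alpha> S'"
    using assms(5,6,7) unfolding minimal_potential_def S'_def by blast
  hence "real_of_int (int (W E S (V - S))) + (1/2) * (real_of_int (\<Sum>x\<in>S. ?a x) - real_of_int (\<Sum>y\<in>V - S. ?a y))
      \<le> real_of_int (int (W E S' (V - S'))) + (1/2) * (real_of_int (\<Sum>x\<in>S'. ?a x) - real_of_int (\<Sum>y\<in>V - S'. ?a y))"
    unfolding potential_def by simp
  hence "int (W E S (V - S)) \<le> int (W E S' (V - S')) - ?a x + ?a y"
    unfolding aS aT by (simp add: field_simps)
  thus ?thesis unfolding dx dy wxy using cut cut' s1 sym[of x y] by linarith
qed

end
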